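(* Let $G$ be a $K_4$-free disk graph, let $\mathsf{opt}$ be the minimum size of an odd cycle transversal of $G$, and let $\mathcal{T}$ be a maximal packing of the triangles of $G$. Let $\rho_0\ge 1$ and let $X_1$ be an odd cycle transversal of $G-V(\mathcal{T})$ of size at most $\rho_0$ times the minimum size of an odd cycle transversal of $G-V(\mathcal{T})$. Set $S_1=V(\mathcal{T})\cup X_1$ and $a=|\mathcal{T}|/\mathsf{opt}$ (when $\mathsf{opt}>0$). Then $|S_1|\le (3a+\rho_0(1-a))\cdot\mathsf{opt}$, equivalently $|S_1|\le 3|\mathcal{T}|+\rho_0(\mathsf{opt}-|\mathcal{T}|)$.
   Context: A disk graph is the intersection graph of a finite set of closed disks in the plane; $K_4$-free means no complete subgraph on 4 vertices. An odd cycle transversal of $G$ is a set $S\subseteq V(G)$ with $G-S$ bipartite. A triangle is a set of three pairwise adjacent vertices; a packing of triangles is a collection of pairwise vertex-disjoint triangles, maximal if no further triangle of $G$ can be added; $V(\mathcal{T})$ is the union of the triangles in $\mathcal{T}$. In the paper $X_1$ is the output of a $\rho_0$-approximation algorithm for \textsc{Bipartization} on planar graphs (the graph $G-V(\mathcal{T})$ is triangle-free, hence planar). *)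

theory Defs
  imports "HOL-Analysis.Analysis"
begin

definition disk_graph :: "'a set \<Rightarrow> ('a \<Rightarrow> 'a \<Rightarrow> bool) \<Rightarrow> bool" where
  "disk_graph V E \<longleftrightarrow> finite V \<and>
     (\<forall>u v. E u v \<longrightarrow> u \<in> V \<and> v \<in> V \<and> u \<noteq> v) \<and>
     (\<exists>(c::'a \<Rightarrow> complex) (r::'a \<Rightarrow> real). (\<forall>u\<in>V. r u > 0) \<and>
        (\<forall>u\<in>V. \<forall>v\<in>V. u \<noteq> v \<longrightarrow>
            (E u v \<longleftrightarrow> cball (c u) (r u) \<inter> cball (c v) (r v) \<noteq> {})))"

definition K4_free :: "'a set \<Rightarrow> ('a \<Rightarrow> 'a \<Rightarrow> bool) \<Rightarrow> bool" where
  "K4_free V E \<longleftrightarrow> \<not> (\<exists>K. K \<subseteq> V \<and> card K = 4 \<and> (\<forall>u\<in>K. \<forall>v\<in>K. u \<noteq> v \<longrightarrow> E u v))"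

definition bipartite_on :: "'a set \<Rightarrow> ('a \<Rightarrow> 'a \<Rightarrow> bool) \<Rightarrow> bool" where
  "bipartite_on V E \<longleftrightarrow> (\<exists>f :: 'a \<Rightarrow> bool. \<forall>u\<in>V. \<forall>v\<in>V. E u v \<longrightarrow> f u \<noteq> f v)"

definition is_oct :: "'a set \<Rightarrow> ('a \<Rightarrow> 'a \<Rightarrow> bool) \<Rightarrow> 'a set \<Rightarrow> bool" where
  "is_oct V E S \<longleftrightarrow> S \<subseteq> V \<and> bipartite_on (V - S) E"

definition oct_number :: "'a set \<Rightarrow> ('a \<Rightarrow> 'a \<Rightarrow> bool) \<Rightarrow> nat" where
  "oct_number V E = Min (card ` {S. is_oct V E S})"

definition triangle :: "'a set \<Rightarrow> ('a \<Rightarrow> 'a \<Rightarrow> bool) \<Rightarrow> 'a set \<Rightarrow> bool" where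
  "triangle V E t \<longleftrightarrow> t \<subseteq> V \<and> card t = 3 \<and> (\<forall>u\<in>t. \<forall>v\<in>t. u \<noteq> v \<longrightarrow> E u v)"

definition triangle_packing :: "'a set \<Rightarrow> ('a \<Rightarrow> 'a \<Rightarrow> bool) \<Rightarrow> 'a set set \<Rightarrow> bool" where
  "triangle_packing V E T \<longleftrightarrow> (\<forall>t\<in>T. triangle V E t) \<and>
     (\<forall>t\<in>T. \<forall>t'\<in>T. t \<noteq> t' \<longrightarrow> t \<inter> t' = {})"

definition maximal_triangle_packing :: "'a set \<Rightarrow> ('a \<Rightarrow> 'a \<Rightarrow> bool) \<Rightarrow> 'a set set \<Rightarrow> bool" where
  "maximal_triangle_packing V E T \<longleftrightarrow> triangle_packing V E T \<and>
     (\<forall>t. triangle V E t \<and> t \<notin> T \<longrightarrow> \<not> triangle_packing V E (insert t T))"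

end

theory Submission
  imports Defs
begin

lemma tri_hit:
  assumes "triangle V E t" "bipartite_on (V - S) E"
  shows "t \<inter> S \<noteq> {}"
proof
  assume h: "t \<inter> S = {}"
  from assms(1) have tV: "t \<subseteq> V" and c: "card t = 3"
    and adj: "\<forall>u\<in>t. \<forall>v\<in>t. u \<noteq> v \<longrightarrow> E u v" by (auto simp: triangle_def)
  from c obtain x y z where t: "t = {x, y, z}" "x \<noteq> y" "x \<noteq> z" "y \<noteq> z"
    by (auto simp: card_3_iff)
  from assms(2) obtain f :: "'a \<Rightarrow> bool" where f: "\<forall>u\<in>V - S. \<forall>v\<in>V - S. E u v \<longrightarrow> f u \<noteq> f v"
    unfolding bipartite_on_def by (elim exE) (erule that)
  have "x \<in> V - S" "y \<in> V - S" "z \<in> V - S" using tV h t by auto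
  moreover have "E x y" "E x z" "E y z" using adj t by auto
  ultimately have "f x \<noteq> f y" "f x \<noteq> f z" "f y \<noteq> f z" using f by blast+
  then show False by (cases "f x"; cases "f y"; cases "f z") simp_all
qed

theorem lemma7:
  fixes V :: "'a set" and E :: "'a \<Rightarrow> 'a \<Rightarrow> bool"
    and T :: "'a set set" and X1 :: "'a set" and \<rho>0 :: real
  assumes "disk_graph V E" and "K4_free V E"
    and "maximal_triangle_packing V E T"
    and "\<rho>0 \<ge> 1"
    and "is_oct (V - \<Union>T) E X1"
    and "real (card X1) \<le> \<rho>0 * real (oct_number (V - \<Union>T) E)"
  shows "(oct_number V E > 0 \<longrightarrow>
           (let opt = real (oct_number V E); a = real (card T) / opt in
              real (card (\<Union>T \<union> X1)) \<le> (3 * a + \<rho>0 * (1 - a)) * opt))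
       \<and> real (card (\<Union>T \<union> X1))
           \<le> 3 * real (card T) + \<rho>0 * (real (oct_number V E) - real (card T))"
proof -
  have finV: "finite V" using assms(1) by (simp add: disk_graph_def)
  have pack: "triangle_packing V E T" using assms(3) by (simp add: maximal_triangle_packing_def)
  have tris: "\<forall>t\<in>T. triangle V E t" and disj: "\<forall>t\<in>T. \<forall>t'\<in>T. t \<noteq> t' \<longrightarrow> t \<inter> t' = {}"
    using pack by (auto simp: triangle_packing_def)
  have TV: "T \<subseteq> Pow V" using tris by (auto simp: triangle_def)
  have finT: "finite T" using finite_subset[OF TV] finV by simp
  have c3: "\<forall>t\<in>T. card t = 3" using tris by (auto simp: triangle_def)
  have finEach: "\<forall>t\<in>T. finite t"
  proof
    fix t assume "t \<in> T"
    then have "t \<subseteq> V" using TV by auto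
    then show "finite t" using finV by (rule finite_subset)
  qed
  have octfin: "\<And>W. finite W \<Longrightarrow> finite (card ` {S. is_oct W E S})"
  proof -
    fix W :: "'a set" assume fw: "finite W"
    have "{S. is_oct W E S} \<subseteq> Pow W" by (auto simp: is_oct_def)
    moreover have "finite (Pow W)" using fw by simp
    ultimately have "finite {S. is_oct W E S}" by (rule finite_subset)
    then show "finite (card ` {S. is_oct W E S})" by (rule finite_imageI)
  qed
  have octV: "is_oct V E V" by (simp add: is_oct_def bipartite_on_def)
  have "oct_number V E \<in> card ` {S. is_oct V E S}"
    unfolding oct_number_def using octfin[OF finV] octV by (intro Min_in) auto
  then obtain S where S: "is_oct V E S" "card S = oct_number V E" by auto
  have SV: "S \<subseteq> V" and bS: "bipartite_on (V - S) E" using S by (auto simp: is_oct_def)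
  have finS: "finite S" using SV finV finite_subset by blast
  have oct2: "is_oct (V - \<Union>T) E (S - \<Union>T)"
  proof -
    obtain f :: "'a \<Rightarrow> bool" where f: "\<forall>u\<in>V - S. \<forall>v\<in>V - S. E u v \<longrightarrow> f u \<noteq> f v"
      using bS unfolding bipartite_on_def by (elim exE) (erule that)
    have "V - \<Union>T - (S - \<Union>T) \<subseteq> V - S" by blast
    then have "\<forall>u\<in>V - \<Union>T - (S - \<Union>T). \<forall>v\<in>V - \<Union>T - (S - \<Union>T). E u v \<longrightarrow> f u \<noteq> f v"
      using f by blast
    then show ?thesis unfolding is_oct_def bipartite_on_def using SV by (intro conjI exI[of _ f]) (blast, assumption)
  qed
  have finW: "finite (V - \<Union>T)" using finV by simp
  have le1: "oct_number (V - \<Union>T) E \<le> card (S - \<Union>T)"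
    unfolding oct_number_def using octfin[OF finW] oct2 by (intro Min_le) auto
  define g where "g t = (SOME x. x \<in> t \<inter> S)" for t
  have g: "\<forall>t\<in>T. g t \<in> t \<inter> S"
  proof
    fix t assume "t \<in> T"
    then have "t \<inter> S \<noteq> {}" using tri_hit tris bS by blast
    then obtain x where "x \<in> t \<inter> S" by blast
    then show "g t \<in> t \<inter> S" unfolding g_def by (rule someI)
  qed
  have "inj_on g T"
  proof (rule inj_onI)
    fix t t' assume "t \<in> T" "t' \<in> T" "g t = g t'"
    note h = this
    have "g t \<in> t" "g t' \<in> t'" using g h(1,2) by auto
    then have "g t \<in> t \<inter> t'" using h(3) by simp
    then have "t \<inter> t' \<noteq> {}" by blast
    then show "t = t'" using disj h(1,2) by blast
  qed
  moreover have "g ` T \<subseteq> S \<inter> \<Union>T" using g by blast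
  ultimately have le2: "card T \<le> card (S \<inter> \<Union>T)"
    using finS by (intro card_inj_on_le[of g]) simp_all
  have split: "card S = card (S \<inter> \<Union>T) + card (S - \<Union>T)"
    using finS by (rule card_Int_Diff)
  have key: "real (oct_number (V - \<Union>T) E) \<le> real (oct_number V E) - real (card T)"
    using le1 le2 split S(2) by linarith
  have cu: "card (\<Union>T) \<le> 3 * card T"
  proof -
    have "card (\<Union>T) \<le> sum card T" using card_Union_le_sum_card finEach by blast
    also have "\<dots> = 3 * card T" using c3 by simp
    finally show ?thesis .
  qed
  have "card (\<Union>T \<union> X1) \<le> card (\<Union>T) + card X1" by (rule card_Un_le)
  then have "real (card (\<Union>T \<union> X1)) \<le> 3 * real (card T) + real (card X1)" using cu by linarith
  also have "\<dots> \<le> 3 * real (card T) + \<rho>0 * (real (oct_number V E) - real (card T))"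
  proof -
    have "\<rho>0 * real (oct_number (V - \<Union>T) E) \<le> \<rho>0 * (real (oct_number V E) - real (card T))"
      using key assms(4) by (intro mult_left_mono) auto
    then show ?thesis using assms(6) by linarith
  qed
  finally have main: "real (card (\<Union>T \<union> X1)) \<le> 3 * real (card T) + \<rho>0 * (real (oct_number V E) - real (card T))" .
  show ?thesis
  proof (intro conjI impI)
    assume "oct_number V E > 0"
    then have "(3 * (real (card T) / real (oct_number V E)) + \<rho>0 * (1 - real (card T) / real (oct_number V E))) * real (oct_number V E)
      = 3 * real (card T) + \<rho>0 * (real (oct_number V E) - real (card T))"
      by (simp add: field_simps)
    then show "let opt = real (oct_number V E); a = real (card T) / opt in
              real (card (\<Union>T \<union> X1)) \<le> (3 * a + \<rho>0 * (1 - a)) * opt"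
      using main by (simp add: Let_def)
  qed (rule main)
qed

end
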